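(* For every $n\ge1$, the set of Tamari interval-posets of size $n$ is a sublattice of the lattice of integer posets on $[n]$ under the weak order on integer relations.
   Context: An integer relation of size $n$ is a reflexive binary relation $R$ on $[n]$, with $\mathrm{Inc}(R)=\{(a,b)\in R:a<b\}$, $\mathrm{Dec}(R)=\{(b,a)\in R:a<b\}$; the weak order on integer relations is $R\le S$ iff $\mathrm{Inc}(S)\subseteq\mathrm{Inc}(R)$ and $\mathrm{Dec}(R)\subseteq\mathrm{Dec}(S)$. An integer poset is an antisymmetric transitive integer relation; the integer posets on $[n]$ form a lattice under this order. A Tamari interval-poset of size $n$ is an integer poset $\triangleleft$ on $[n]$ such that for all $a<b<c$: $a\triangleleft c\Rightarrow b\triangleleft c$ and $c\triangleleft a\Rightarrow b\triangleleft a$. *)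

theory Defs
  imports Main
begin

definition int_rel :: "nat \<Rightarrow> (nat \<times> nat) set \<Rightarrow> bool" where
  "int_rel n R \<longleftrightarrow> R \<subseteq> {1..n} \<times> {1..n} \<and> (\<forall>x\<in>{1..n}. (x, x) \<in> R)"

definition Inc :: "(nat \<times> nat) set \<Rightarrow> (nat \<times> nat) set" where
  "Inc R = {(a, b). (a, b) \<in> R \<and> a < b}"

definition Dec :: "(nat \<times> nat) set \<Rightarrow> (nat \<times> nat) set" where
  "Dec R = {(b, a). (b, a) \<in> R \<and> a < b}"

definition weak_le :: "(nat \<times> nat) set \<Rightarrow> (nat \<times> nat) set \<Rightarrow> bool" where
  "weak_le R S \<longleftrightarrow> Inc S \<subseteq> Inc R \<and> Dec R \<subseteq> Dec S"

definition int_poset :: "nat \<Rightarrow> (nat \<times> nat) set \<Rightarrow> bool" where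
  "int_poset n R \<longleftrightarrow> int_rel n R \<and> antisym R \<and> trans R"

definition tamari_interval_poset :: "nat \<Rightarrow> (nat \<times> nat) set \<Rightarrow> bool" where
  "tamari_interval_poset n R \<longleftrightarrow> int_poset n R \<and>
     (\<forall>a b c. a < b \<and> b < c \<longrightarrow>
        ((a, c) \<in> R \<longrightarrow> (b, c) \<in> R) \<and> ((c, a) \<in> R \<longrightarrow> (b, a) \<in> R))"

definition ipos_meet :: "nat \<Rightarrow> (nat \<times> nat) set \<Rightarrow> (nat \<times> nat) set \<Rightarrow> (nat \<times> nat) set \<Rightarrow> bool" where
  "ipos_meet n R S M \<longleftrightarrow> int_poset n M \<and> weak_le M R \<and> weak_le M S \<and>
     (\<forall>X. int_poset n X \<and> weak_le X R \<and> weak_le X S \<longrightarrow> weak_le X M)"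

definition ipos_join :: "nat \<Rightarrow> (nat \<times> nat) set \<Rightarrow> (nat \<times> nat) set \<Rightarrow> (nat \<times> nat) set \<Rightarrow> bool" where
  "ipos_join n R S J \<longleftrightarrow> int_poset n J \<and> weak_le R J \<and> weak_le S J \<and>
     (\<forall>X. int_poset n X \<and> weak_le R X \<and> weak_le S X \<longrightarrow> weak_le J X)"

end

theory Submission
  imports Defs
begin

lemma tam_unf:
  assumes "tamari_interval_poset n T"
  shows "T \<subseteq> {1..n} \<times> {1..n}" "\<And>x. x\<in>{1..n} \<Longrightarrow> (x,x)\<in>T" "antisym T" "trans T"
    "\<And>a b c. a<b \<Longrightarrow> b<c \<Longrightarrow> (a,c)\<in>T \<Longrightarrow> (b,c)\<in>T"
    "\<And>a b c. a<b \<Longrightarrow> b<c \<Longrightarrow> (c,a)\<in>T \<Longrightarrow> (b,a)\<in>T"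
  using assms unfolding tamari_interval_poset_def int_poset_def int_rel_def by blast+

context
  fixes n :: nat and R S :: "(nat \<times> nat) set"
  assumes tR: "tamari_interval_poset n R" and tS: "tamari_interval_poset n S"
begin

private definition "P = Inc R \<union> Inc S"
private definition "D = Dec R \<inter> Dec S"

private lemma P_lt: "(a,b)\<in>P \<Longrightarrow> a<b"
  unfolding P_def Inc_def by auto

private lemma P_sub: "(a,b)\<in>P \<Longrightarrow> a\<in>{1..n} \<and> b\<in>{1..n}"
  unfolding P_def Inc_def using tam_unf(1)[OF tR] tam_unf(1)[OF tS] by auto

private lemma D_lt: "(a,b)\<in>D \<Longrightarrow> b<a"
  unfolding D_def Dec_def by auto

private lemma D_sub: "(a,b)\<in>D \<Longrightarrow> a\<in>{1..n} \<and> b\<in>{1..n}"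
  unfolding D_def Dec_def using tam_unf(1)[OF tR] by auto

private lemma P1: "(a,c)\<in>P \<Longrightarrow> a<b \<Longrightarrow> b<c \<Longrightarrow> (b,c)\<in>P"
  unfolding P_def Inc_def using tam_unf(5)[OF tR] tam_unf(5)[OF tS] by auto

private lemma D2: "(c,a)\<in>D \<Longrightarrow> a<b \<Longrightarrow> b<c \<Longrightarrow> (b,a)\<in>D"
  unfolding D_def Dec_def using tam_unf(6)[OF tR] tam_unf(6)[OF tS] by auto

private lemma DD: "(a,b)\<in>D \<Longrightarrow> (b,c)\<in>D \<Longrightarrow> (a,c)\<in>D"
  unfolding D_def Dec_def using tam_unf(4)[OF tR] tam_unf(4)[OF tS]
  by (auto dest: transD)

private lemma PD: "(a,b)\<in>P \<Longrightarrow> (b,c)\<in>D \<Longrightarrow> a<c \<Longrightarrow> (a,c)\<in>P"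
  unfolding P_def D_def Dec_def Inc_def using tam_unf(4)[OF tR] tam_unf(4)[OF tS]
  by (auto dest: transD)

private lemma DP: "(a,b)\<in>D \<Longrightarrow> (b,c)\<in>P \<Longrightarrow> a<c \<Longrightarrow> (a,c)\<in>P"
  unfolding P_def D_def Dec_def Inc_def using tam_unf(4)[OF tR] tam_unf(4)[OF tS]
  by (auto dest: transD)

private lemma PDanti: "(a,b)\<in>P \<Longrightarrow> (b,a)\<notin>D"
  unfolding P_def D_def Dec_def Inc_def using tam_unf(3)[OF tR] tam_unf(3)[OF tS]
  by (auto dest: antisymD)

private lemma I_lt: "(a,b)\<in>P\<^sup>+ \<Longrightarrow> a<b"
  by (induction rule: trancl_induct) (auto dest: P_lt)

private lemma I_sub: "(a,b)\<in>P\<^sup>+ \<Longrightarrow> a\<in>{1..n} \<and> b\<in>{1..n}"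
  by (induction rule: trancl_induct) (auto dest: P_sub)

private lemma I_first: "(a,b)\<in>P\<^sup>+ \<Longrightarrow> \<exists>u. (a,u)\<in>P \<and> (u = b \<or> (u,b)\<in>P\<^sup>+)"
  by (erule converse_tranclE) auto

private lemma ID_anti: assumes "(a,b)\<in>P\<^sup>+" "(b,a)\<in>D" shows False
proof -
  obtain u where u: "(a,u)\<in>P" "u = b \<or> (u,b)\<in>P\<^sup>+" using I_first[OF assms(1)] by blast
  show False
  proof (cases "u = b")
    case True thus ?thesis using u assms PDanti by auto
  next
    case False
    then have "u<b" using u I_lt by auto
    moreover have "a<u" using u P_lt by auto
    ultimately have "(u,a)\<in>D" using D2 assms(2) by blast
    thus ?thesis using u PDanti by auto
  qed
qed

private lemma I1: "(a,c)\<in>P\<^sup>+ \<Longrightarrow> a<b \<Longrightarrow> b<c \<Longrightarrow> (b,c)\<in>P\<^sup>+"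
proof (induction arbitrary: b rule: converse_trancl_induct)
  case (base y) thus ?case using P1 by blast
next
  case (step a u)
  show ?case
  proof (cases "b<u")
    case True
    then have "(b,u)\<in>P" using P1 step by blast
    thus ?thesis using step by auto
  next
    case False
    then show ?thesis using step by (cases "b = u") auto
  qed
qed

private lemma ID: "(x,y)\<in>P\<^sup>+ \<Longrightarrow> (y,z)\<in>D \<Longrightarrow> x<z \<Longrightarrow> (x,z)\<in>P\<^sup>+"
proof (induction arbitrary: z rule: trancl_induct)
  case (base y) thus ?case using PD by blast
next
  case (step u y z)
  have uy: "u<y" using step P_lt by auto
  show ?case
  proof (cases "z < u")
    case True
    then have "(u,z)\<in>D" using D2 step uy by blast
    thus ?thesis using step True by blast
  next
    case False
    show ?thesis
    proof (cases "z = u")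
      case True thus ?thesis using step by auto
    next
      case f2: False
      with False have "u<z" by auto
      then have "(u,z)\<in>P" using PD step by blast
      thus ?thesis using step by auto
    qed
  qed
qed

private lemma DI: assumes "(x,y)\<in>D" "(y,z)\<in>P\<^sup>+" "x\<noteq>z" shows "(x,z)\<in>P\<^sup>+"
proof -
  obtain u where u: "(y,u)\<in>P" "u = z \<or> (u,z)\<in>P\<^sup>+" using I_first[OF assms(2)] by blast
  have yx: "y<x" using assms D_lt by auto
  have yu: "y<u" using u P_lt by auto
  have uz: "u \<le> z" using u I_lt by fastforce
  show ?thesis
  proof (cases "u < x")
    case True
    then have "(u,y)\<in>D" using D2 assms yu by blast
    thus ?thesis using u PDanti by auto
  next
    case False
    show ?thesis
    proof (cases "u = x")
      case True thus ?thesis using u assms(3) by auto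
    next
      case f2: False
      with False have "x<u" by auto
      then have "(x,u)\<in>P" using DP assms u by blast
      thus ?thesis using u by auto
    qed
  qed
qed

lemma meet_ex: "\<exists>M. ipos_meet n R S M \<and> tamari_interval_poset n M"
proof -
  define M where "M = P\<^sup>+ \<union> D \<union> Id_on {1..n}"
  have IncM: "Inc M = P\<^sup>+"
    unfolding M_def Inc_def using I_lt D_lt by fastforce
  have DecM: "Dec M = D"
    unfolding M_def Dec_def using I_lt D_lt by (fastforce)
  have rel: "int_rel n M" unfolding int_rel_def M_def using I_sub D_sub by auto
  have anti: "antisym M"
    unfolding antisym_def M_def using I_lt D_lt ID_anti by (fastforce dest: I_lt D_lt)
  have tr: "trans M"
  proof (rule transI)
    fix x y z assume a: "(x,y)\<in>M" "(y,z)\<in>M"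
    show "(x,z)\<in>M"
    proof (cases "x = z")
      case True thus ?thesis using a rel unfolding int_rel_def by auto
    next
      case ne: False
      show ?thesis
      proof (cases "x < z")
        case lt: True
        from a show ?thesis unfolding M_def
        proof (elim UnE)
          assume "(x,y)\<in>P\<^sup>+" "(y,z)\<in>P\<^sup>+" thus "(x,z)\<in>P\<^sup>+ \<union> D \<union> Id_on {1..n}" by (meson UnI1 trancl_trans)
        next
          assume "(x,y)\<in>P\<^sup>+" "(y,z)\<in>D" thus "(x,z)\<in>P\<^sup>+ \<union> D \<union> Id_on {1..n}" using ID lt by auto
        next
          assume "(x,y)\<in>D" "(y,z)\<in>P\<^sup>+" thus "(x,z)\<in>P\<^sup>+ \<union> D \<union> Id_on {1..n}" using DI ne by auto
        next
          assume "(x,y)\<in>D" "(y,z)\<in>D" thus "(x,z)\<in>P\<^sup>+ \<union> D \<union> Id_on {1..n}" using DD by auto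
        qed auto
      next
        case False
        with ne have lt: "z < x" by auto
        from a show ?thesis unfolding M_def
        proof (elim UnE)
          assume "(x,y)\<in>P\<^sup>+" "(y,z)\<in>P\<^sup>+" thus "(x,z)\<in>P\<^sup>+ \<union> D \<union> Id_on {1..n}" by (meson UnI1 trancl_trans)
        next
          assume h: "(x,y)\<in>P\<^sup>+" "(y,z)\<in>D"
          then have "x<y" using I_lt by auto
          then have "(x,z)\<in>D" using D2 h lt by blast
          thus "(x,z)\<in>P\<^sup>+ \<union> D \<union> Id_on {1..n}" by auto
        next
          assume "(x,y)\<in>D" "(y,z)\<in>P\<^sup>+" thus "(x,z)\<in>P\<^sup>+ \<union> D \<union> Id_on {1..n}" using DI ne by auto
        next
          assume "(x,y)\<in>D" "(y,z)\<in>D" thus "(x,z)\<in>P\<^sup>+ \<union> D \<union> Id_on {1..n}" using DD by auto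
        qed auto
      qed
    qed
  qed
  have pos: "int_poset n M" using rel anti tr unfolding int_poset_def by auto
  have tam: "tamari_interval_poset n M"
    unfolding tamari_interval_poset_def
  proof (intro conjI pos allI impI)
    fix a b c :: nat assume o: "a<b \<and> b<c"
    { assume "(a,c)\<in>M"
      then have "(a,c)\<in>P\<^sup>+" using o D_lt unfolding M_def by fastforce
      thus "(b,c)\<in>M" using I1 o unfolding M_def by auto }
    { assume "(c,a)\<in>M"
      then have "(c,a)\<in>D" using o unfolding M_def by (auto dest: I_lt)
      thus "(b,a)\<in>M" using D2 o unfolding M_def by auto }
  qed
  have PI: "P \<subseteq> P\<^sup>+" by auto
  have meet: "ipos_meet n R S M"
    unfolding ipos_meet_def
  proof (intro conjI pos allI impI)
    have "Inc R \<subseteq> P\<^sup>+" using PI unfolding P_def by blast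
    moreover have "D \<subseteq> Dec R" unfolding D_def by blast
    ultimately show "weak_le M R" unfolding weak_le_def IncM DecM by blast
    have "Inc S \<subseteq> P\<^sup>+" using PI unfolding P_def by blast
    moreover have "D \<subseteq> Dec S" unfolding D_def by blast
    ultimately show "weak_le M S" unfolding weak_le_def IncM DecM by blast
    fix X assume X: "int_poset n X \<and> weak_le X R \<and> weak_le X S"
    have tX: "trans X" using X unfolding int_poset_def by blast
    have trX: "trans (Inc X)"
    proof (rule transI)
      fix x y z assume "(x,y)\<in>Inc X" "(y,z)\<in>Inc X"
      then have "(x,y)\<in>X" "(y,z)\<in>X" "x<y" "y<z" unfolding Inc_def by auto
      then show "(x,z)\<in>Inc X" using tX unfolding Inc_def by (auto dest: transD)
    qed
    have "Inc R \<subseteq> Inc X" "Inc S \<subseteq> Inc X" using X unfolding weak_le_def by blast+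
    then have "P \<subseteq> Inc X" unfolding P_def by blast
    then have "P\<^sup>+ \<subseteq> (Inc X)\<^sup>+" by (rule trancl_mono_subset)
    then have "P\<^sup>+ \<subseteq> Inc X" unfolding trancl_id[OF trX] .
    moreover have "Dec X \<subseteq> D" using X unfolding weak_le_def D_def by blast
    ultimately show "weak_le X M" unfolding weak_le_def IncM DecM by blast
  qed
  show ?thesis using meet tam by blast
qed

end

definition rv :: "nat \<Rightarrow> (nat \<times> nat) set \<Rightarrow> (nat \<times> nat) set" where
  "rv n R = {(a,b). a\<in>{1..n} \<and> b\<in>{1..n} \<and> (n+1-a, n+1-b) \<in> R}"

lemma rv_sub: "rv n R \<subseteq> {1..n}\<times>{1..n}" unfolding rv_def by auto

lemma rv_rv: "R \<subseteq> {1..n}\<times>{1..n} \<Longrightarrow> rv n (rv n R) = R"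
  unfolding rv_def by (auto simp: Suc_diff_le) (auto dest!: subsetD)

lemma rv_mem: "a\<in>{1..n} \<Longrightarrow> b\<in>{1..n} \<Longrightarrow> (a,b)\<in>rv n R \<longleftrightarrow> (n+1-a,n+1-b)\<in>R"
  unfolding rv_def by auto

lemma rv_poset: "int_poset n R \<Longrightarrow> int_poset n (rv n R)"
  unfolding int_poset_def int_rel_def
proof (intro conjI)
  assume h: "(R \<subseteq> {1..n} \<times> {1..n} \<and> (\<forall>x\<in>{1..n}. (x, x) \<in> R)) \<and> antisym R \<and> trans R"
  show "rv n R \<subseteq> {1..n} \<times> {1..n}" by (rule rv_sub)
  show "\<forall>x\<in>{1..n}. (x, x) \<in> rv n R"
  proof
    fix x :: nat assume x: "x\<in>{1..n}"
    then have "n+1-x\<in>{1..n}" by auto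
    thus "(x,x)\<in>rv n R" using h x unfolding rv_def by auto
  qed
  show "antisym (rv n R)"
  proof (rule antisymI)
    fix x y assume a: "(x,y)\<in>rv n R" "(y,x)\<in>rv n R"
    then have "n+1-x = n+1-y" using h unfolding rv_def antisym_def by auto
    thus "x = y" using a unfolding rv_def by auto
  qed
  show "trans (rv n R)" using h unfolding rv_def trans_def by blast
qed

lemma rv_tam: "tamari_interval_poset n R \<Longrightarrow> tamari_interval_poset n (rv n R)"
  unfolding tamari_interval_poset_def
proof (intro conjI allI impI)
  assume h: "int_poset n R \<and> (\<forall>a b c. a < b \<and> b < c \<longrightarrow> ((a, c) \<in> R \<longrightarrow> (b, c) \<in> R) \<and> ((c, a) \<in> R \<longrightarrow> (b, a) \<in> R))"
  show "int_poset n (rv n R)" using h rv_poset by auto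
  fix a b c :: nat assume o: "a < b \<and> b < c"
  { assume "(a,c)\<in>rv n R"
    then have m: "a\<in>{1..n}" "c\<in>{1..n}" "(n+1-a,n+1-c)\<in>R" unfolding rv_def by auto
    have "n+1-c < n+1-b" "n+1-b < n+1-a" using o m by auto
    then have "(n+1-b,n+1-c)\<in>R" using h m(3) by blast
    thus "(b,c)\<in>rv n R" using m o unfolding rv_def by auto }
  { assume "(c,a)\<in>rv n R"
    then have m: "a\<in>{1..n}" "c\<in>{1..n}" "(n+1-c,n+1-a)\<in>R" unfolding rv_def by auto
    have "n+1-c < n+1-b" "n+1-b < n+1-a" using o m by auto
    then have "(n+1-b,n+1-a)\<in>R" using h m(3) by blast
    thus "(b,a)\<in>rv n R" using m o unfolding rv_def by auto }
qed

lemma rv_weak: assumes "R \<subseteq> {1..n}\<times>{1..n}" "S \<subseteq> {1..n}\<times>{1..n}"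
  shows "weak_le (rv n R) (rv n S) \<longleftrightarrow> weak_le S R"
proof -
  have A: "Inc (rv n S) \<subseteq> Inc (rv n R) \<longleftrightarrow> Dec S \<subseteq> Dec R"
  proof
    assume h: "Inc (rv n S) \<subseteq> Inc (rv n R)"
    show "Dec S \<subseteq> Dec R"
    proof
      fix p assume p: "p \<in> Dec S"
      obtain b a where ba: "p = (b,a)" "(b,a)\<in>S" "a<b" using p unfolding Dec_def by auto
      have m: "a\<in>{1..n}" "b\<in>{1..n}" using ba assms(2) by auto
      have "(n+1-b,n+1-a)\<in>Inc (rv n S)" using m ba unfolding Inc_def rv_def by auto
      then have "(n+1-b,n+1-a)\<in>rv n R" using h unfolding Inc_def by auto
      then have "(b,a)\<in>R" using m unfolding rv_def by auto
      thus "p\<in>Dec R" using ba unfolding Dec_def by auto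
    qed
  next
    assume h: "Dec S \<subseteq> Dec R"
    show "Inc (rv n S) \<subseteq> Inc (rv n R)"
    proof
      fix p assume p: "p \<in> Inc (rv n S)"
      obtain a b where ab: "p = (a,b)" "(a,b)\<in>rv n S" "a<b" using p unfolding Inc_def by auto
      have m: "a\<in>{1..n}" "b\<in>{1..n}" "(n+1-a,n+1-b)\<in>S" using ab unfolding rv_def by auto
      have "(n+1-a,n+1-b)\<in>Dec S" using m ab unfolding Dec_def by auto
      then have "(n+1-a,n+1-b)\<in>R" using h unfolding Dec_def by auto
      thus "p\<in>Inc (rv n R)" using ab m unfolding Inc_def rv_def by auto
    qed
  qed
  have B: "Dec (rv n R) \<subseteq> Dec (rv n S) \<longleftrightarrow> Inc R \<subseteq> Inc S"
  proof
    assume h: "Dec (rv n R) \<subseteq> Dec (rv n S)"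
    show "Inc R \<subseteq> Inc S"
    proof
      fix p assume p: "p \<in> Inc R"
      obtain a b where ab: "p = (a,b)" "(a,b)\<in>R" "a<b" using p unfolding Inc_def by auto
      have m: "a\<in>{1..n}" "b\<in>{1..n}" using ab assms(1) by auto
      have "(n+1-a,n+1-b)\<in>Dec (rv n R)" using m ab unfolding Dec_def rv_def by auto
      then have "(n+1-a,n+1-b)\<in>rv n S" using h unfolding Dec_def by auto
      then have "(a,b)\<in>S" using m unfolding rv_def by auto
      thus "p\<in>Inc S" using ab unfolding Inc_def by auto
    qed
  next
    assume h: "Inc R \<subseteq> Inc S"
    show "Dec (rv n R) \<subseteq> Dec (rv n S)"
    proof
      fix p assume p: "p \<in> Dec (rv n R)"
      obtain b a where ab: "p = (b,a)" "(b,a)\<in>rv n R" "a<b" using p unfolding Dec_def by auto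
      have m: "a\<in>{1..n}" "b\<in>{1..n}" "(n+1-b,n+1-a)\<in>R" using ab unfolding rv_def by auto
      have "(n+1-b,n+1-a)\<in>Inc R" using m ab unfolding Inc_def by auto
      then have "(n+1-b,n+1-a)\<in>S" using h unfolding Inc_def by auto
      thus "p\<in>Dec (rv n S)" using ab m unfolding Dec_def rv_def by auto
    qed
  qed
  show ?thesis unfolding weak_le_def using A B by blast
qed
theorem mainTheorem8:
  fixes n :: nat
  assumes "n \<ge> 1"
  shows "\<forall>R S. tamari_interval_poset n R \<and> tamari_interval_poset n S \<longrightarrow>
           (\<exists>M. ipos_meet n R S M \<and> tamari_interval_poset n M) \<and>
           (\<exists>J. ipos_join n R S J \<and> tamari_interval_poset n J)"
proof (intro allI impI conjI)
  fix R S assume h: "tamari_interval_poset n R \<and> tamari_interval_poset n S"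
  then have tR: "tamari_interval_poset n R" and tS: "tamari_interval_poset n S" by auto
  show "\<exists>M. ipos_meet n R S M \<and> tamari_interval_poset n M" using meet_ex[OF tR tS] .
  have subR: "R \<subseteq> {1..n}\<times>{1..n}" using tam_unf(1)[OF tR] .
  have subS: "S \<subseteq> {1..n}\<times>{1..n}" using tam_unf(1)[OF tS] .
  obtain M where M: "ipos_meet n (rv n R) (rv n S) M" "tamari_interval_poset n M"
    using meet_ex[OF rv_tam[OF tR] rv_tam[OF tS]] by blast
  have subM: "M \<subseteq> {1..n}\<times>{1..n}" using tam_unf(1)[OF M(2)] .
  define J where "J = rv n M"
  have rJ: "rv n J = M" unfolding J_def using rv_rv[OF subM] .
  have subJ: "J \<subseteq> {1..n}\<times>{1..n}" unfolding J_def by (rule rv_sub)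
  have tJ: "tamari_interval_poset n J" unfolding J_def using rv_tam[OF M(2)] .
  have pJ: "int_poset n J" using tJ unfolding tamari_interval_poset_def by auto
  have "ipos_join n R S J"
    unfolding ipos_join_def
  proof (intro conjI pJ allI impI)
    show "weak_le R J" using rv_weak[OF subJ subR] M(1) rJ unfolding ipos_meet_def by auto
    show "weak_le S J" using rv_weak[OF subJ subS] M(1) rJ unfolding ipos_meet_def by auto
    fix X assume X: "int_poset n X \<and> weak_le R X \<and> weak_le S X"
    have subX: "X \<subseteq> {1..n}\<times>{1..n}" using X unfolding int_poset_def int_rel_def by auto
    have "int_poset n (rv n X)" using X rv_poset by auto
    moreover have "weak_le (rv n X) (rv n R)" using rv_weak[OF subX subR] X by auto
    moreover have "weak_le (rv n X) (rv n S)" using rv_weak[OF subX subS] X by auto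
    ultimately have "weak_le (rv n X) M" using M(1) unfolding ipos_meet_def by auto
    thus "weak_le J X" using rv_weak[OF subX subJ] rJ by auto
  qed
  thus "\<exists>J. ipos_join n R S J \<and> tamari_interval_poset n J" using tJ by blast
qed

end
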